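(* Let $(X,\alpha)$ be a Cantor minimal system, $m\ge1$, and let $c:X\to\mathbb{Z}_m$ be a continuous function. Suppose that $\alpha\times c$, $(x,k)\mapsto(\alpha(x),k+c(x))$, is a minimal homeomorphism of $X\times\mathbb{Z}_m$. Then \[ T\big(K^0(X\times\mathbb{Z}_m,\alpha\times c)/\pi^*(K^0(X,\alpha))\big)\cong\mathbb{Z}_m, \] and a generator of this group is the image of the class of the $\mathbb{Z}$-valued continuous function \[ f_0(x,k)=\begin{cases}1 & c(\alpha^{-1}(x))\neq0\text{ and }k\in\{0,1,\dots,c(\alpha^{-1}(x))-1\},\\ 0&\text{otherwise}.\end{cases} \]
   Context: A Cantor minimal system $(X,\alpha)$ is a Cantor set $X$ with a homeomorphism $\alpha$ having no nontrivial closed invariant subsets. $\mathbb{Z}_m=\mathbb{Z}/m\mathbb{Z}$, identified with $\{0,1,\dots,m-1\}$. For a minimal homeomorphism $\gamma$ of a Cantor set $Z$, $K^0(Z,\gamma)=C(Z,\mathbb{Z})/\{f-f\circ\gamma^{-1}:f\in C(Z,\mathbb{Z})\}$. $\pi:X\times\mathbb{Z}_m\to X$ is the first-coordinate projection and $\pi^*:K^0(X,\alpha)\to K^0(X\times\mathbb{Z}_m,\alpha\times c)$ is $[g]\mapsto[g\circ\pi]$. $T(G)$ denotes the torsion subgroup of an abelian group $G$. *)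

theory Defs
  imports "HOL-Analysis.Analysis" "HOL-Algebra.Elementary_Groups"
begin

definition cantor_set :: "'a::metric_space set \<Rightarrow> bool" where
  "cantor_set X \<longleftrightarrow> X \<noteq> {} \<and> compact X \<and> (\<forall>x\<in>X. x islimpt X)
     \<and> (\<forall>x\<in>X. connected_component_set X x = {x})"

definition minimal_homeo :: "'a::topological_space set \<Rightarrow> ('a \<Rightarrow> 'a) \<Rightarrow> bool" where
  "minimal_homeo Z \<gamma> \<longleftrightarrow> (\<exists>\<gamma>'. homeomorphism Z Z \<gamma> \<gamma>') \<and>
     (\<forall>F. F \<subseteq> Z \<and> closedin (top_of_set Z) F \<and> \<gamma> ` F = F \<longrightarrow> F = {} \<or> F = Z)"

text \<open>The additive group C(Z,int) of continuous integer-valued functions on Z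
  (functions are taken to be 0 outside Z, so that they are determined by their values on Z).\<close>
definition CZ :: "'a::topological_space set \<Rightarrow> ('a \<Rightarrow> int) monoid" where
  "CZ Z = \<lparr>carrier = {f. continuous_on Z f \<and> (\<forall>x. x \<notin> Z \<longrightarrow> f x = 0)},
           monoid.mult = (\<lambda>f g x. f x + g x), one = (\<lambda>x. 0)\<rparr>"

definition cobound :: "'a::topological_space set \<Rightarrow> ('a \<Rightarrow> 'a) \<Rightarrow> ('a \<Rightarrow> int) set" where
  "cobound Z \<gamma> = (\<lambda>f x. if x \<in> Z then f x - f (inv_into Z \<gamma> x) else 0) ` carrier (CZ Z)"

definition K0 :: "'a::topological_space set \<Rightarrow> ('a \<Rightarrow> 'a) \<Rightarrow> ('a \<Rightarrow> int) set monoid" where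
  "K0 Z \<gamma> = CZ Z Mod cobound Z \<gamma>"

definition skew :: "('a \<Rightarrow> 'a) \<Rightarrow> ('a \<Rightarrow> int) \<Rightarrow> nat \<Rightarrow> 'a \<times> int \<Rightarrow> 'a \<times> int" where
  "skew \<alpha> c m = (\<lambda>(x,k). (\<alpha> x, (k + c x) mod int m))"

definition Zm :: "nat \<Rightarrow> int set" where
  "Zm m = {0..<int m}"

text \<open>pi^* : K^0(X,alpha) -> K^0(X x Z_m, alpha x c), [g] |-> [g o pi].\<close>
definition pistar :: "'a::topological_space set \<Rightarrow> ('a \<Rightarrow> 'a) \<Rightarrow> ('a \<Rightarrow> int) \<Rightarrow> nat
     \<Rightarrow> ('a \<Rightarrow> int) set \<Rightarrow> ('a \<times> int \<Rightarrow> int) set" where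
  "pistar X \<alpha> c m A =
     (let g = (SOME g. g \<in> A);
          gpi = (\<lambda>p. if p \<in> X \<times> Zm m then g (fst p) else 0)
      in cobound (X \<times> Zm m) (skew \<alpha> c m) #>\<^bsub>CZ (X \<times> Zm m)\<^esub> gpi)"

definition torsion :: "('a, 'b) monoid_scheme \<Rightarrow> ('a, 'b) monoid_scheme" where
  "torsion G = G\<lparr>carrier := {x \<in> carrier G. \<exists>n::nat. n > 0 \<and> x [^]\<^bsub>G\<^esub> n = \<one>\<^bsub>G\<^esub>}\<rparr>"

definition pistar_image :: "'a::topological_space set \<Rightarrow> ('a \<Rightarrow> 'a) \<Rightarrow> ('a \<Rightarrow> int) \<Rightarrow> nat
     \<Rightarrow> ('a \<times> int \<Rightarrow> int) set set" where
  "pistar_image X \<alpha> c m = pistar X \<alpha> c m ` carrier (K0 X \<alpha>)"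

definition Kquot :: "'a::topological_space set \<Rightarrow> ('a \<Rightarrow> 'a) \<Rightarrow> ('a \<Rightarrow> int) \<Rightarrow> nat
     \<Rightarrow> ('a \<times> int \<Rightarrow> int) set set monoid" where
  "Kquot X \<alpha> c m = K0 (X \<times> Zm m) (skew \<alpha> c m) Mod pistar_image X \<alpha> c m"

definition qclass :: "'a::topological_space set \<Rightarrow> ('a \<Rightarrow> 'a) \<Rightarrow> ('a \<Rightarrow> int) \<Rightarrow> nat
     \<Rightarrow> ('a \<times> int \<Rightarrow> int) \<Rightarrow> ('a \<times> int \<Rightarrow> int) set set" where
  "qclass X \<alpha> c m f = pistar_image X \<alpha> c m #>\<^bsub>K0 (X \<times> Zm m) (skew \<alpha> c m)\<^esub>
       (cobound (X \<times> Zm m) (skew \<alpha> c m) #>\<^bsub>CZ (X \<times> Zm m)\<^esub> f)"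

end

theory Submission imports Defs begin

lemma cont_int_comp:
  assumes "continuous_on S (f::_\<Rightarrow>int)"
  shows "continuous_on S (\<lambda>x. h (f x))"
  using continuous_on_compose[OF assms Topological_Spaces.continuous_on_discrete[of _ h]] by (simp add: o_def)

lemma open_int_pair: "open (A :: (int\<times>int) set)"
proof -
  have "A = (\<Union>p\<in>A. {fst p} \<times> {snd p})" by auto
  moreover have "open ({fst p} \<times> {snd p})" for p :: "int \<times> int"
    by (intro open_Times) (rule discrete_topology_class.open_discrete)+
  then have "open (\<Union>p\<in>A. {fst p} \<times> {snd p})" by (intro open_UN) auto
  ultimately show ?thesis by simp
qed

lemma cont_int_comp2:
  assumes "continuous_on S (f::_\<Rightarrow>int)" "continuous_on S (g::_\<Rightarrow>int)"
  shows "continuous_on S (\<lambda>x. h (f x) (g x))"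
proof -
  have c1: "continuous_on S (\<lambda>x. (f x, g x))" using assms by (intro continuous_intros)
  have c2: "continuous_on UNIV (\<lambda>p::int\<times>int. h (fst p) (snd p))"
    by (simp add: continuous_on_open_vimage open_int_pair)
  show ?thesis using continuous_on_compose[OF c1 continuous_on_subset[OF c2]] by (simp add: o_def)
qed

lemma carrier_CZ: "f \<in> carrier (CZ Z) \<longleftrightarrow> continuous_on Z f \<and> (\<forall>x. x \<notin> Z \<longrightarrow> f x = 0)"
  by (simp add: CZ_def)
lemma mult_CZ [simp]: "f \<otimes>\<^bsub>CZ Z\<^esub> g = (\<lambda>x. f x + g x)"
  by (simp add: CZ_def)
lemma one_CZ [simp]: "\<one>\<^bsub>CZ Z\<^esub> = (\<lambda>x. 0)"
  by (simp add: CZ_def)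

lemma CZ_add: "f \<in> carrier (CZ Z) \<Longrightarrow> g \<in> carrier (CZ Z) \<Longrightarrow> (\<lambda>x. f x + g x) \<in> carrier (CZ Z)"
  by (auto simp: carrier_CZ intro: cont_int_comp2)
lemma CZ_neg: "f \<in> carrier (CZ Z) \<Longrightarrow> (\<lambda>x. - f x) \<in> carrier (CZ Z)"
  by (auto simp: carrier_CZ intro: cont_int_comp)
lemma CZ_smult: "f \<in> carrier (CZ Z) \<Longrightarrow> (\<lambda>x. k * f x) \<in> carrier (CZ Z)"
  by (auto simp: carrier_CZ intro: cont_int_comp)
lemma CZ_zero: "(\<lambda>x. 0) \<in> carrier (CZ Z)"
  by (auto simp: carrier_CZ)

lemma CZ_comm_group: "comm_group (CZ Z)"
proof (rule comm_groupI)
  fix x assume "x \<in> carrier (CZ Z)"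
  then show "\<exists>y\<in>carrier (CZ Z). y \<otimes>\<^bsub>CZ Z\<^esub> x = \<one>\<^bsub>CZ Z\<^esub>"
    by (intro bexI[of _ "\<lambda>z. - x z"]) (auto intro: CZ_neg)
qed (auto intro: CZ_add CZ_zero)

lemma CZ_inv: "f \<in> carrier (CZ Z) \<Longrightarrow> inv\<^bsub>CZ Z\<^esub> f = (\<lambda>x. - f x)"
  by (rule group.inv_equality[OF comm_group.axioms(2)[OF CZ_comm_group]]) (auto intro: CZ_neg)

lemma CZ_pow: "f [^]\<^bsub>CZ Z\<^esub> (n::nat) = (\<lambda>x. int n * f x)"
  by (induction n) (auto simp: algebra_simps)

lemma quot2:
  fixes G (structure)
  assumes CG: "comm_group G" and sH: "subgroup H G" and sW: "subgroup W G" and HW: "H \<subseteq> W"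
  and P_def: "P = (\<lambda>w. H #>\<^bsub>G\<^esub> w) ` W"
  and Q_def: "Q = (G Mod H) Mod P"
  and \<phi>_def: "\<phi> = (\<lambda>f. P #>\<^bsub>G Mod H\<^esub> (H #>\<^bsub>G\<^esub> f))"
  shows "comm_group Q" and "carrier Q = \<phi> ` carrier G"
    and "\<And>f f'. f \<in> carrier G \<Longrightarrow> f' \<in> carrier G \<Longrightarrow> \<phi> f \<otimes>\<^bsub>Q\<^esub> \<phi> f' = \<phi> (f \<otimes> f')"
    and "\<one>\<^bsub>Q\<^esub> = \<phi> \<one>"
    and "\<And>f. f \<in> carrier G \<Longrightarrow> \<phi> f = \<one>\<^bsub>Q\<^esub> \<longleftrightarrow> f \<in> W"
    and "\<And>f n. f \<in> carrier G \<Longrightarrow> \<phi> f [^]\<^bsub>Q\<^esub> (n::nat) = \<phi> (f [^] n)"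
proof -
  interpret comm_group G by (rule CG)
  define K where "K = G Mod H"
  have nH: "H \<lhd> G" using sH by (rule subgroup_imp_normal)
  have cK: "comm_group K" unfolding K_def using sH by (rule abelian_FactGroup)
  interpret K: comm_group K by (rule cK)
  have hr: "(\<lambda>a. H #> a) \<in> hom G K" unfolding K_def by (rule normal.r_coset_hom_Mod[OF nH])
  interpret gh: group_hom G K "\<lambda>a. H #> a"
    by (simp add: group_hom_def group_hom_axioms_def hr K.group_axioms is_group)
  have sP: "subgroup P K" unfolding P_def by (rule gh.subgroup_img_is_subgroup[OF sW])
  have nP: "P \<lhd> K" using sP by (rule K.subgroup_imp_normal)
  show "comm_group Q" unfolding Q_def K_def[symmetric] using sP by (rule K.abelian_FactGroup)
  show "carrier Q = \<phi> ` carrier G"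
    unfolding Q_def \<phi>_def K_def[symmetric] carrier_FactGroup[of K]
    by (simp add: K_def carrier_FactGroup[of G] image_image)
  show "\<phi> f \<otimes>\<^bsub>Q\<^esub> \<phi> f' = \<phi> (f \<otimes> f')" if "f \<in> carrier G" "f' \<in> carrier G" for f f'
  proof -
    have "H #> f \<in> carrier K" "H #> f' \<in> carrier K" using that gh.hom_closed by auto
    then have "\<phi> f \<otimes>\<^bsub>Q\<^esub> \<phi> f' = P #>\<^bsub>K\<^esub> ((H #> f) \<otimes>\<^bsub>K\<^esub> (H #> f'))"
      unfolding Q_def \<phi>_def K_def[symmetric] using normal.rcos_sum[OF nP] by simp
    also have "(H #> f) \<otimes>\<^bsub>K\<^esub> (H #> f') = H #> (f \<otimes> f')"
      using that gh.hom_mult by simp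
    finally show ?thesis unfolding \<phi>_def K_def by simp
  qed
  have one: "\<phi> \<one> = P"
  proof -
    have e: "H #> \<one> = \<one>\<^bsub>K\<^esub>" by simp
    have c: "P #>\<^bsub>K\<^esub> \<one>\<^bsub>K\<^esub> = P" by (rule K.coset_mult_one) (use sP subgroup.subset in blast)
    show ?thesis unfolding \<phi>_def K_def[symmetric] e c by (rule refl)
  qed
  show "\<one>\<^bsub>Q\<^esub> = \<phi> \<one>" unfolding one Q_def by simp
  show "\<phi> f = \<one>\<^bsub>Q\<^esub> \<longleftrightarrow> f \<in> W" if f: "f \<in> carrier G" for f
  proof -
    have fK: "H #> f \<in> carrier K" using f gh.hom_closed by auto
    have "\<phi> f = P \<longleftrightarrow> H #> f \<in> P"
    proof
      assume "\<phi> f = P"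
      then show "H #> f \<in> P" using K.rcos_self[OF fK sP] unfolding \<phi>_def K_def by simp
    next
      assume "H #> f \<in> P"
      then show "\<phi> f = P" unfolding \<phi>_def K_def[symmetric]
        using subgroup.rcos_const[OF sP K.is_group] by simp
    qed
    also have "\<dots> \<longleftrightarrow> f \<in> W"
    proof
      assume "H #> f \<in> P"
      then obtain w where w: "w \<in> W" "H #> f = H #> w" unfolding P_def by auto
      have "f \<in> H #> w" using rcos_self[OF f sH] w by simp
      then obtain h where h: "h \<in> H" "f = h \<otimes> w" unfolding r_coset_def by auto
      have "h \<in> W" using HW h(1) by blast
      from subgroup.m_closed[OF sW this w(1)] show "f \<in> W" using h(2) by simp
    qed (auto simp: P_def)
    finally show ?thesis unfolding Q_def by simp
  qed
  show "\<phi> f [^]\<^bsub>Q\<^esub> (n::nat) = \<phi> (f [^] n)" if f: "f \<in> carrier G" for f n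
  proof -
    have fK: "H #> f \<in> carrier K" using f gh.hom_closed by auto
    have "\<phi> f [^]\<^bsub>Q\<^esub> n = P #>\<^bsub>K\<^esub> ((H #> f) [^]\<^bsub>K\<^esub> n)"
      unfolding Q_def \<phi>_def K_def[symmetric] using normal.FactGroup_pow[OF nP fK] by simp
    also have "(H #> f) [^]\<^bsub>K\<^esub> n = H #> (f [^] n)"
      unfolding K_def using normal.FactGroup_pow[OF nH f] by simp
    finally show ?thesis unfolding \<phi>_def K_def by simp
  qed
qed


lemma cyclic_torsion:
  fixes Q (structure) and a and m :: nat
  assumes cQ: "comm_group Q" and a: "a \<in> carrier Q" and m: "m \<ge> 1" and am: "a [^] m = \<one>"
    and inj: "\<And>i. i < m \<Longrightarrow> a [^] i = \<one> \<Longrightarrow> i = 0"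
    and tor: "\<And>x n. x \<in> carrier Q \<Longrightarrow> 0 < n \<Longrightarrow> x [^] (n::nat) = \<one> \<Longrightarrow> \<exists>i<m. x = a [^] i"
  shows "torsion Q \<cong> integer_mod_group m \<and> a \<in> carrier (torsion Q)
     \<and> generate (torsion Q) {a} = carrier (torsion Q)"
proof -
  interpret comm_group Q by (rule cQ)
  define S where "S = {x \<in> carrier Q. \<exists>n::nat. n > 0 \<and> x [^] n = \<one>}"
  have T: "torsion Q = Q\<lparr>carrier := S\<rparr>" by (simp add: torsion_def S_def)
  have powmod: "a [^] k = a [^] (k mod m)" for k::nat
  proof -
    have "k = m * (k div m) + k mod m" by simp
    then have "a [^] k = a [^] (m * (k div m) + k mod m)" by (rule arg_cong)
    also have "\<dots> = (a [^] m) [^] (k div m) \<otimes> a [^] (k mod m)"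
      using a by (simp add: nat_pow_mult nat_pow_pow)
    also have "\<dots> = a [^] (k mod m)" using a am by simp
    finally show ?thesis .
  qed
  have S_eq: "S = (\<lambda>i. a [^] i) ` {..<m}"
  proof
    show "S \<subseteq> (\<lambda>i. a [^] i) ` {..<m}"
    proof
      fix x assume "x \<in> S"
      then obtain n :: nat where "x \<in> carrier Q" "n > 0" "x [^] n = \<one>" by (auto simp: S_def)
      then obtain i where "i < m" "x = a [^] i" using tor by blast
      then show "x \<in> (\<lambda>i. a [^] i) ` {..<m}" by blast
    qed
    show "(\<lambda>i. a [^] i) ` {..<m} \<subseteq> S"
    proof
      fix x assume "x \<in> (\<lambda>i. a [^] i) ` {..<m}"
      then obtain i :: nat where x: "x = a [^] i" by blast
      have "x [^] m = (a [^] m) [^] i" using a by (simp add: x nat_pow_pow mult.commute)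
      then have "x [^] m = \<one>" using am by simp
      then show "x \<in> S" using m a x by (auto simp: S_def intro!: exI[of _ m])
    qed
  qed
  have sub: "subgroup S Q"
  proof (rule subgroupI)
    show "S \<subseteq> carrier Q" by (auto simp: S_def)
    show "S \<noteq> {}" by (auto simp: S_def intro!: exI[of _ 1])
    fix x assume "x \<in> S"
    then obtain n :: nat where n: "x \<in> carrier Q" "n > 0" "x [^] n = \<one>" by (auto simp: S_def)
    have "inv x [^] n = \<one>" using n by (simp add: nat_pow_inv)
    then show "inv x \<in> S" using n by (auto simp: S_def)
  next
    fix x y assume "x \<in> S" "y \<in> S"
    then obtain n k :: nat where n: "x \<in> carrier Q" "n > 0" "x [^] n = \<one>"
      and k: "y \<in> carrier Q" "k > 0" "y [^] k = \<one>" by (auto simp: S_def)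
    have "(x \<otimes> y) [^] (n * k) = x [^] (n * k) \<otimes> y [^] (n * k)"
      by (rule pow_mult_distrib) (use n k in \<open>simp_all add: m_comm\<close>)
    moreover have "x [^] (n * k) = \<one>" using n nat_pow_pow[of x n k] by simp
    moreover have "y [^] (n * k) = \<one>" using k nat_pow_pow[of y k n] by (simp add: mult.commute)
    ultimately have "(x \<otimes> y) [^] (n * k) = \<one>" by simp
    then show "x \<otimes> y \<in> S" using n k by (auto simp: S_def intro!: exI[of _ "n*k"])
  qed
  have cT: "carrier (torsion Q) = S" unfolding T by simp
  have gT: "group (torsion Q)" unfolding T by (rule subgroup.subgroup_is_group[OF sub is_group])
  have powT: "x [^]\<^bsub>torsion Q\<^esub> (n::nat) = x [^] n" for x n
    unfolding T by (rule nat_pow_consistent[symmetric])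
  have aS: "a \<in> S" using a am m by (auto simp: S_def intro!: exI[of _ m])
  define \<psi> where "\<psi> = (\<lambda>i::int. a [^] nat i)"
  have carrZ: "carrier (integer_mod_group m) = {0..<int m}" using m by (simp add: carrier_integer_mod_group)
  have multZ: "x \<otimes>\<^bsub>integer_mod_group m\<^esub> y = (x + y) mod int m" for x y
    using m by (simp add: integer_mod_group_def)
  have hom: "\<psi> \<in> hom (integer_mod_group m) (torsion Q)"
  proof (rule homI)
    fix x assume "x \<in> carrier (integer_mod_group m)"
    then have "nat x < m" using carrZ by auto
    then show "\<psi> x \<in> carrier (torsion Q)" unfolding cT \<psi>_def S_eq
      by (intro image_eqI[where x="nat x"] refl) auto
  next
    fix x y assume "x \<in> carrier (integer_mod_group m)" "y \<in> carrier (integer_mod_group m)"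
    then have xy: "0 \<le> x" "0 \<le> y" using carrZ by auto
    have "nat ((x + y) mod int m) = (nat x + nat y) mod m"
      using xy by (simp add: nat_mod_distrib nat_add_distrib)
    then have "\<psi> (x \<otimes>\<^bsub>integer_mod_group m\<^esub> y) = a [^] (nat x + nat y)"
      unfolding \<psi>_def multZ using powmod by metis
    also have "\<dots> = \<psi> x \<otimes> \<psi> y" unfolding \<psi>_def using a by (simp add: nat_pow_mult)
    finally show "\<psi> (x \<otimes>\<^bsub>integer_mod_group m\<^esub> y) = \<psi> x \<otimes>\<^bsub>torsion Q\<^esub> \<psi> y"
      unfolding T by simp
  qed
  have injn: "i = j" if "i < m" "j < m" "a [^] i = a [^] j" for i j
  proof -
    have "i \<le> j \<Longrightarrow> i = j"
      if "i < m" "j < m" "a [^] i = a [^] j" for i j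
    proof -
      assume ij: "i \<le> j"
      have "a [^] i \<otimes> a [^] (j - i) = a [^] (i + (j - i))" by (rule nat_pow_mult[OF a])
      also have "\<dots> = a [^] j" using ij by simp
      also have "\<dots> = a [^] i \<otimes> \<one>" using that(3) a by simp
      finally have "a [^] i \<otimes> a [^] (j - i) = a [^] i \<otimes> \<one>" .
      then have "a [^] (j - i) = \<one>" using a by simp
      have "j - i < m" using that(2) by linarith
      then have "j - i = 0" using inj \<open>a [^] (j - i) = \<one>\<close> by blast
      then show "i = j" using ij by simp
    qed
    then show ?thesis using that by (metis nat_le_linear)
  qed
  have bij: "bij_betw \<psi> (carrier (integer_mod_group m)) (carrier (torsion Q))"
  proof (rule bij_betw_imageI)
    show "inj_on \<psi> (carrier (integer_mod_group m))"
    proof (rule inj_onI)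
      fix x y assume "x \<in> carrier (integer_mod_group m)" "y \<in> carrier (integer_mod_group m)" "\<psi> x = \<psi> y"
      then have "nat x = nat y" "0 \<le> x" "0 \<le> y" using injn[of "nat x" "nat y"] carrZ by (auto simp: \<psi>_def)
      then show "x = y" by simp
    qed
    have "\<psi> ` {0..<int m} = (\<lambda>i. a [^] i) ` {..<m}"
    proof
      show "\<psi> ` {0..<int m} \<subseteq> (\<lambda>i. a [^] i) ` {..<m}"
      proof
        fix y assume "y \<in> \<psi> ` {0..<int m}"
        then obtain x where x: "x \<in> {0..<int m}" "y = a [^] nat x" unfolding \<psi>_def by blast
        then have "nat x < m" by auto
        then show "y \<in> (\<lambda>i. a [^] i) ` {..<m}" unfolding x(2) by blast
      qed
      show "(\<lambda>i. a [^] i) ` {..<m} \<subseteq> \<psi> ` {0..<int m}"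
      proof
        fix x assume "x \<in> (\<lambda>i. a [^] i) ` {..<m}"
        then obtain i where "i < m" "x = a [^] i" by auto
        then show "x \<in> \<psi> ` {0..<int m}" unfolding \<psi>_def by (intro image_eqI[of _ _ "int i"]) auto
      qed
    qed
    then show "\<psi> ` carrier (integer_mod_group m) = carrier (torsion Q)"
      unfolding carrZ T S_eq by simp
  qed
  have iso1: "integer_mod_group m \<cong> torsion Q"
    by (rule is_isoI, rule isoI[OF hom bij])
  have gZ: "group (integer_mod_group m)" by (rule group_integer_mod_group)
  have iso2: "torsion Q \<cong> integer_mod_group m"
    by (rule group.iso_sym[OF gZ iso1])
  have gen: "generate (torsion Q) {a} = carrier (torsion Q)"
  proof
    show "generate (torsion Q) {a} \<subseteq> carrier (torsion Q)"
      using group.generate_incl[OF gT] aS T by simp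
    show "carrier (torsion Q) \<subseteq> generate (torsion Q) {a}"
    proof
      fix x assume "x \<in> carrier (torsion Q)"
      then obtain i :: nat where x: "x = a [^] i" unfolding T S_eq by auto
      have "x = a [^]\<^bsub>torsion Q\<^esub> (int i)" unfolding x int_pow_int powT ..
      then show "x \<in> generate (torsion Q) {a}"
        using group.generate_pow[OF gT, of a] aS T by auto
    qed
  qed
  show ?thesis using iso2 gen aS T by simp
qed


lemma mod_sub_cases:
  fixes k c M :: int
  assumes "0 \<le> k" "k < M" "0 \<le> c" "c < M"
  shows "(k - c) mod M = (if c \<le> k then k - c else k - c + M)"
proof (cases "c \<le> k")
  case True then show ?thesis using assms by simp
next
  case False
  have "(k - c) mod M = (k - c + M) mod M" by simp
  also have "\<dots> = k - c + M" using assms False by (intro mod_pos_pos_trivial) auto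
  finally show ?thesis using False by simp
qed

locale cms =
  fixes X :: "'a::metric_space set" and \<alpha> \<alpha>inv :: "'a \<Rightarrow> 'a" and c :: "'a \<Rightarrow> int" and m :: nat
  assumes cantor: "cantor_set X"
    and hom: "homeomorphism X X \<alpha> \<alpha>inv"
    and minX: "minimal_homeo X \<alpha>"
    and m1: "m \<ge> 1"
    and cc: "continuous_on X c" and cZ: "c ` X \<subseteq> Zm m"
    and minY: "minimal_homeo (X \<times> Zm m) (skew \<alpha> c m)"
begin

abbreviation "Y \<equiv> X \<times> Zm m"
abbreviation "\<beta> \<equiv> skew \<alpha> c m"

definition rho where "rho y = (\<alpha>inv (fst y), (snd y - c (\<alpha>inv (fst y))) mod int m)"
definition sig where "sig y = (fst y, (snd y + 1) mod int m)"
definition gpi where "gpi g = (\<lambda>p. if p \<in> Y then g (fst p) else 0)"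
definition cobY where "cobY u = (\<lambda>p. if p \<in> Y then u p - u (rho p) else 0)"
definition cobX where "cobX u = (\<lambda>x. if x \<in> X then u x - u (\<alpha>inv x) else (0::int))"
definition W where "W = {h \<in> carrier (CZ Y). \<exists>g\<in>carrier (CZ X). \<exists>u\<in>carrier (CZ Y).
   \<forall>y\<in>Y. h y = g (fst y) + u y - u (rho y)}"
definition f0 where "f0 = (\<lambda>(x,k). if (x,k) \<in> X \<times> Zm m \<and> c (\<alpha>inv x) \<noteq> 0 \<and> k \<in> {0..<c (\<alpha>inv x)} then 1 else (0::int))"

lemma memY: "(x, k) \<in> Y \<longleftrightarrow> x \<in> X \<and> 0 \<le> k \<and> k < int m"
  by (simp add: Zm_def)

lemma Xne: "X \<noteq> {}" using cantor by (simp add: cantor_set_def)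
lemma Xclosed: "closed X" using cantor by (simp add: cantor_set_def compact_imp_closed)

lemma a_in: "x \<in> X \<Longrightarrow> \<alpha> x \<in> X" using hom by (auto simp: homeomorphism_def)
lemma ai_in: "x \<in> X \<Longrightarrow> \<alpha>inv x \<in> X" using hom by (auto simp: homeomorphism_def)
lemma a_ai: "x \<in> X \<Longrightarrow> \<alpha> (\<alpha>inv x) = x" using hom by (auto simp: homeomorphism_def)
lemma ai_a: "x \<in> X \<Longrightarrow> \<alpha>inv (\<alpha> x) = x" using hom by (auto simp: homeomorphism_def)
lemma cont_a: "continuous_on X \<alpha>" using hom by (auto simp: homeomorphism_def)
lemma cont_ai: "continuous_on X \<alpha>inv" using hom by (auto simp: homeomorphism_def)
lemma c_range: "x \<in> X \<Longrightarrow> 0 \<le> c x \<and> c x < int m" using cZ by (auto simp: Zm_def)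

lemma beta_eq: "\<beta> (x, k) = (\<alpha> x, (k + c x) mod int m)" by (simp add: skew_def)

lemma m_pos: "0 < int m" using m1 by simp

lemma rho_in: "y \<in> Y \<Longrightarrow> rho y \<in> Y"
  using m_pos by (auto simp: rho_def Zm_def ai_in)
lemma beta_in: "y \<in> Y \<Longrightarrow> \<beta> y \<in> Y"
  using m_pos by (auto simp: skew_def Zm_def a_in)
lemma sig_in: "y \<in> Y \<Longrightarrow> sig y \<in> Y"
  using m_pos by (auto simp: sig_def Zm_def)
lemma beta_rho: "y \<in> Y \<Longrightarrow> \<beta> (rho y) = y"
  by (cases y) (auto simp: rho_def skew_def Zm_def a_ai ai_in mod_add_left_eq)
lemma rho_beta: "y \<in> Y \<Longrightarrow> rho (\<beta> y) = y"
  by (cases y) (auto simp: rho_def skew_def Zm_def ai_a a_in mod_diff_left_eq)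
lemma rho_sig: "y \<in> Y \<Longrightarrow> rho (sig y) = sig (rho y)"
  by (cases y) (auto simp: rho_def sig_def mod_simps algebra_simps)
lemma fst_sig [simp]: "fst (sig y) = fst y" by (simp add: sig_def)
lemma fst_rho: "fst (rho y) = \<alpha>inv (fst y)" by (simp add: rho_def)

lemma inj_beta: "inj_on \<beta> Y"
  by (metis inj_onI rho_beta)
lemma inv_beta: "y \<in> Y \<Longrightarrow> inv_into Y \<beta> y = rho y"
  by (rule inv_into_f_eq[OF inj_beta rho_in beta_rho])
lemma inj_a: "inj_on \<alpha> X"
  by (metis inj_onI ai_a)
lemma inv_a: "x \<in> X \<Longrightarrow> inv_into X \<alpha> x = \<alpha>inv x"
  by (rule inv_into_f_eq[OF inj_a ai_in a_ai])

lemma cont_rho: "continuous_on Y rho"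
proof -
  obtain g where g: "homeomorphism Y Y \<beta> g" using minY by (auto simp: minimal_homeo_def)
  have e: "g y = rho y" if "y \<in> Y" for y
  proof -
    have "g (\<beta> (rho y)) = rho y" using g rho_in[OF that] by (auto simp: homeomorphism_def)
    then show ?thesis using beta_rho[OF that] by simp
  qed
  have cg: "continuous_on Y g" using g by (auto simp: homeomorphism_def)
  show ?thesis by (rule continuous_on_eq[OF cg e])
qed

lemma cont_sig: "continuous_on Y sig"
proof -
  have "continuous_on Y (\<lambda>y. (snd y + 1) mod int m)"
    by (rule cont_int_comp[where h="\<lambda>k. (k + 1) mod int m"]) (intro continuous_intros)
  then have "continuous_on Y (\<lambda>y. (fst y, (snd y + 1) mod int m))"
    by (intro continuous_on_Pair continuous_on_fst continuous_on_id)
  then show ?thesis by (simp add: sig_def[abs_def])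
qed

lemma cont_fstX: "continuous_on X g \<Longrightarrow> continuous_on Y (\<lambda>p. g (fst p))"
  by (rule continuous_on_compose2[of X g Y fst]) (auto intro: continuous_intros)

lemma cont_comp_Y: "continuous_on Y u \<Longrightarrow> continuous_on S h \<Longrightarrow> h ` S \<subseteq> Y \<Longrightarrow> continuous_on S (\<lambda>p. u (h p))"
  by (rule continuous_on_compose2)

lemma CZ_on: "continuous_on Z f \<Longrightarrow> (\<lambda>x. if x \<in> Z then f x else 0) \<in> carrier (CZ Z)"
  by (auto simp: carrier_CZ cong: continuous_on_cong)

lemma cobound_Y: "cobound Y \<beta> = cobY ` carrier (CZ Y)"
  unfolding cobound_def cobY_def by (intro image_cong refl) (auto simp: inv_beta)
lemma cobound_X: "cobound X \<alpha> = cobX ` carrier (CZ X)"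
  unfolding cobound_def cobX_def by (intro image_cong refl) (auto simp: inv_a)

lemma cobY_in: "u \<in> carrier (CZ Y) \<Longrightarrow> cobY u \<in> carrier (CZ Y)"
proof -
  assume u: "u \<in> carrier (CZ Y)"
  then have cu: "continuous_on Y u" by (simp add: carrier_CZ)
  have "continuous_on Y (\<lambda>p. u (rho p))" by (rule cont_comp_Y[OF cu cont_rho]) (use rho_in in blast)
  then have "continuous_on Y (\<lambda>p. u p - u (rho p))"
    using cu by (rule cont_int_comp2[where h="\<lambda>a b. b - a", OF _ ])
  then show ?thesis unfolding cobY_def by (rule CZ_on)
qed
lemma cobX_in: "u \<in> carrier (CZ X) \<Longrightarrow> cobX u \<in> carrier (CZ X)"
proof -
  assume u: "u \<in> carrier (CZ X)"
  then have cu: "continuous_on X u" by (simp add: carrier_CZ)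
  have "continuous_on X (\<lambda>p. u (\<alpha>inv p))" by (rule continuous_on_compose2[OF cu cont_ai]) (auto simp: ai_in)
  then have "continuous_on X (\<lambda>p. u p - u (\<alpha>inv p))"
    using cu by (rule cont_int_comp2[where h="\<lambda>a b. b - a", OF _ ])
  then show ?thesis unfolding cobX_def by (rule CZ_on)
qed
lemma gpi_in: "g \<in> carrier (CZ X) \<Longrightarrow> gpi g \<in> carrier (CZ Y)"
  unfolding gpi_def by (intro CZ_on cont_fstX) (auto simp: carrier_CZ)


lemma gG: "group (CZ Z)" by (rule comm_group.axioms(2)[OF CZ_comm_group])

lemma rcos_absorb:
  assumes sH: "subgroup H (CZ Z)" and a: "a \<in> carrier (CZ Z)" and h: "h \<in> H"
  shows "H #>\<^bsub>CZ Z\<^esub> (\<lambda>p. h p + a p) = H #>\<^bsub>CZ Z\<^esub> a"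
proof -
  have "h \<otimes>\<^bsub>CZ Z\<^esub> a \<in> H #>\<^bsub>CZ Z\<^esub> a"
    using group.rcosI[OF gG h subgroup.subset[OF sH] a] .
  then have "H #>\<^bsub>CZ Z\<^esub> a = H #>\<^bsub>CZ Z\<^esub> (h \<otimes>\<^bsub>CZ Z\<^esub> a)"
    by (rule group.repr_independence[OF gG _ a sH])
  then show ?thesis by simp
qed

lemma sub_H: "subgroup (cobound Y \<beta>) (CZ Y)"
  unfolding cobound_Y
proof (rule group.subgroupI[OF gG])
  show "cobY ` carrier (CZ Y) \<subseteq> carrier (CZ Y)" using cobY_in by auto
  show "cobY ` carrier (CZ Y) \<noteq> {}" using CZ_zero by auto
next
  fix a assume "a \<in> cobY ` carrier (CZ Y)"
  then obtain u where u: "u \<in> carrier (CZ Y)" "a = cobY u" by auto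
  have "inv\<^bsub>CZ Y\<^esub> a = cobY (\<lambda>p. - u p)"
    using CZ_inv[OF cobY_in[OF u(1)]] u(2) by (auto simp: cobY_def)
  then show "inv\<^bsub>CZ Y\<^esub> a \<in> cobY ` carrier (CZ Y)" using CZ_neg[OF u(1)] by auto
next
  fix a b assume "a \<in> cobY ` carrier (CZ Y)" "b \<in> cobY ` carrier (CZ Y)"
  then obtain u v where u: "u \<in> carrier (CZ Y)" "a = cobY u" and v: "v \<in> carrier (CZ Y)" "b = cobY v" by auto
  have "a \<otimes>\<^bsub>CZ Y\<^esub> b = cobY (\<lambda>p. u p + v p)" using u v by (auto simp: cobY_def)
  then show "a \<otimes>\<^bsub>CZ Y\<^esub> b \<in> cobY ` carrier (CZ Y)" using CZ_add[OF u(1) v(1)] by auto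
qed

lemma sub_HX: "subgroup (cobound X \<alpha>) (CZ X)"
  unfolding cobound_X
proof (rule group.subgroupI[OF gG])
  show "cobX ` carrier (CZ X) \<subseteq> carrier (CZ X)" using cobX_in by auto
  show "cobX ` carrier (CZ X) \<noteq> {}" using CZ_zero by auto
next
  fix a assume "a \<in> cobX ` carrier (CZ X)"
  then obtain u where u: "u \<in> carrier (CZ X)" "a = cobX u" by auto
  have "inv\<^bsub>CZ X\<^esub> a = cobX (\<lambda>p. - u p)"
    using CZ_inv[OF cobX_in[OF u(1)]] u(2) by (auto simp: cobX_def)
  then show "inv\<^bsub>CZ X\<^esub> a \<in> cobX ` carrier (CZ X)" using CZ_neg[OF u(1)] by auto
next
  fix a b assume "a \<in> cobX ` carrier (CZ X)" "b \<in> cobX ` carrier (CZ X)"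
  then obtain u v where u: "u \<in> carrier (CZ X)" "a = cobX u" and v: "v \<in> carrier (CZ X)" "b = cobX v" by auto
  have "a \<otimes>\<^bsub>CZ X\<^esub> b = cobX (\<lambda>p. u p + v p)" using u v by (auto simp: cobX_def)
  then show "a \<otimes>\<^bsub>CZ X\<^esub> b \<in> cobX ` carrier (CZ X)" using CZ_add[OF u(1) v(1)] by auto
qed

lemma W_I:
  assumes "h \<in> carrier (CZ Y)" "g \<in> carrier (CZ X)" "u \<in> carrier (CZ Y)"
    "\<And>y. y \<in> Y \<Longrightarrow> h y = g (fst y) + u y - u (rho y)"
  shows "h \<in> W"
  using assms unfolding W_def by blast

lemma W_E:
  assumes "h \<in> W"
  obtains g u where "h \<in> carrier (CZ Y)" "g \<in> carrier (CZ X)" "u \<in> carrier (CZ Y)"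
    "\<And>y. y \<in> Y \<Longrightarrow> h y = g (fst y) + u y - u (rho y)"
  using assms unfolding W_def by blast

lemma W_add: "h \<in> W \<Longrightarrow> h' \<in> W \<Longrightarrow> (\<lambda>p. h p + h' p) \<in> W"
proof -
  assume "h \<in> W" "h' \<in> W"
  then obtain g u g' u' where a: "h \<in> carrier (CZ Y)" "g \<in> carrier (CZ X)" "u \<in> carrier (CZ Y)"
    "\<And>y. y \<in> Y \<Longrightarrow> h y = g (fst y) + u y - u (rho y)"
    and b: "h' \<in> carrier (CZ Y)" "g' \<in> carrier (CZ X)" "u' \<in> carrier (CZ Y)"
    "\<And>y. y \<in> Y \<Longrightarrow> h' y = g' (fst y) + u' y - u' (rho y)"
    by (metis W_E)
  show ?thesis
    by (rule W_I[OF CZ_add[OF a(1) b(1)] CZ_add[OF a(2) b(2)] CZ_add[OF a(3) b(3)]]) (simp add: a(4) b(4))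
qed

lemma W_smult: "h \<in> W \<Longrightarrow> (\<lambda>p. k * h p) \<in> W"
proof -
  assume "h \<in> W"
  then obtain g u where a: "h \<in> carrier (CZ Y)" "g \<in> carrier (CZ X)" "u \<in> carrier (CZ Y)"
    "\<And>y. y \<in> Y \<Longrightarrow> h y = g (fst y) + u y - u (rho y)"
    by (metis W_E)
  show ?thesis
    by (rule W_I[OF CZ_smult[OF a(1)] CZ_smult[OF a(2)] CZ_smult[OF a(3)]]) (simp add: a(4) algebra_simps)
qed

lemma W_carrier: "W \<subseteq> carrier (CZ Y)" unfolding W_def by blast

lemma H_W: "cobound Y \<beta> \<subseteq> W"
proof
  fix h assume "h \<in> cobound Y \<beta>"
  then obtain u where u: "u \<in> carrier (CZ Y)" "h = cobY u" unfolding cobound_Y by auto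
  show "h \<in> W" unfolding u(2) by (rule W_I[OF cobY_in[OF u(1)] CZ_zero u(1)]) (simp add: cobY_def)
qed

lemma sub_W: "subgroup W (CZ Y)"
proof (rule group.subgroupI[OF gG])
  show "W \<subseteq> carrier (CZ Y)" by (rule W_carrier)
  show "W \<noteq> {}" using H_W subgroup.one_closed[OF sub_H] by blast
next
  fix a assume a: "a \<in> W"
  have "inv\<^bsub>CZ Y\<^esub> a = (\<lambda>p. (-1) * a p)" using CZ_inv a W_carrier by auto
  then show "inv\<^bsub>CZ Y\<^esub> a \<in> W" using W_smult[OF a, of "-1"] by simp
next
  fix a b assume "a \<in> W" "b \<in> W"
  then show "a \<otimes>\<^bsub>CZ Y\<^esub> b \<in> W" using W_add by simp
qed

lemma gpi_cobX: "u \<in> carrier (CZ X) \<Longrightarrow> gpi (cobX u) = cobY (gpi u)"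
  by (auto simp: gpi_def cobX_def cobY_def fun_eq_iff rho_in fst_rho ai_in)

lemma pistar_coset: "g \<in> carrier (CZ X) \<Longrightarrow>
   pistar X \<alpha> c m (cobound X \<alpha> #>\<^bsub>CZ X\<^esub> g) = cobound Y \<beta> #>\<^bsub>CZ Y\<^esub> gpi g"
proof -
  assume g: "g \<in> carrier (CZ X)"
  define A where "A = cobound X \<alpha> #>\<^bsub>CZ X\<^esub> g"
  have "g \<in> A" unfolding A_def by (rule group.rcos_self[OF gG g sub_HX])
  then have g'A: "(SOME g. g \<in> A) \<in> A" by (rule someI[of "\<lambda>x. x \<in> A"])
  define g' where "g' = (SOME g. g \<in> A)"
  have g'A2: "g' \<in> A" unfolding g'_def by (rule g'A)
  obtain h where h: "h \<in> cobound X \<alpha>" "g' = h \<otimes>\<^bsub>CZ X\<^esub> g"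
    using g'A2 unfolding A_def r_coset_def by auto
  obtain u where u: "u \<in> carrier (CZ X)" "h = cobX u" using h(1) unfolding cobound_X by auto
  have "pistar X \<alpha> c m A = cobound Y \<beta> #>\<^bsub>CZ Y\<^esub> gpi g'"
    unfolding pistar_def Let_def gpi_def g'_def by simp
  also have "gpi g' = (\<lambda>p. cobY (gpi u) p + gpi g p)"
    unfolding gpi_cobX[OF u(1), symmetric] using h(2) u(2) by (auto simp: fun_eq_iff gpi_def)
  also have "cobound Y \<beta> #>\<^bsub>CZ Y\<^esub> \<dots> = cobound Y \<beta> #>\<^bsub>CZ Y\<^esub> gpi g"
    by (rule rcos_absorb[OF sub_H gpi_in[OF g]]) (auto simp: cobound_Y intro: gpi_in u(1))
  finally show ?thesis unfolding A_def .
qed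

lemma pistar_image_eq: "pistar_image X \<alpha> c m = (\<lambda>w. cobound Y \<beta> #>\<^bsub>CZ Y\<^esub> w) ` W"
proof -
  have "pistar_image X \<alpha> c m = (\<lambda>g. cobound Y \<beta> #>\<^bsub>CZ Y\<^esub> gpi g) ` carrier (CZ X)"
    unfolding pistar_image_def K0_def carrier_FactGroup image_image
    by (intro image_cong refl pistar_coset)
  also have "\<dots> = (\<lambda>w. cobound Y \<beta> #>\<^bsub>CZ Y\<^esub> w) ` W"
  proof
    show "(\<lambda>g. cobound Y \<beta> #>\<^bsub>CZ Y\<^esub> gpi g) ` carrier (CZ X) \<subseteq> (\<lambda>w. cobound Y \<beta> #>\<^bsub>CZ Y\<^esub> w) ` W"
    proof
      fix x assume "x \<in> (\<lambda>g. cobound Y \<beta> #>\<^bsub>CZ Y\<^esub> gpi g) ` carrier (CZ X)"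
      then obtain g where g: "g \<in> carrier (CZ X)" "x = cobound Y \<beta> #>\<^bsub>CZ Y\<^esub> gpi g" by auto
      have "gpi g \<in> W" by (rule W_I[OF gpi_in[OF g(1)] g(1) CZ_zero]) (simp add: gpi_def)
      then show "x \<in> (\<lambda>w. cobound Y \<beta> #>\<^bsub>CZ Y\<^esub> w) ` W" using g(2) by blast
    qed
    show "(\<lambda>w. cobound Y \<beta> #>\<^bsub>CZ Y\<^esub> w) ` W \<subseteq> (\<lambda>g. cobound Y \<beta> #>\<^bsub>CZ Y\<^esub> gpi g) ` carrier (CZ X)"
    proof
      fix x assume "x \<in> (\<lambda>w. cobound Y \<beta> #>\<^bsub>CZ Y\<^esub> w) ` W"
      then obtain w where w: "w \<in> W" "x = cobound Y \<beta> #>\<^bsub>CZ Y\<^esub> w" by auto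
      obtain g u where gu: "w \<in> carrier (CZ Y)" "g \<in> carrier (CZ X)" "u \<in> carrier (CZ Y)"
        "\<And>y. y \<in> Y \<Longrightarrow> w y = g (fst y) + u y - u (rho y)" using w(1) by (metis W_E)
      have "w = (\<lambda>p. cobY u p + gpi g p)"
      proof
        fix p show "w p = cobY u p + gpi g p"
        proof (cases "p \<in> Y")
          case False
          have "\<forall>x. x \<notin> Y \<longrightarrow> w x = 0" using gu(1) unfolding carrier_CZ by blast
          then have "w p = 0" using False by blast
          then show ?thesis using False by (simp add: cobY_def gpi_def)
        qed (simp add: gu(4) cobY_def gpi_def)
      qed
      moreover have "cobY u \<in> cobound Y \<beta>" using gu(3) by (auto simp: cobound_Y)
      ultimately have "x = cobound Y \<beta> #>\<^bsub>CZ Y\<^esub> gpi g"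
        using w(2) rcos_absorb[OF sub_H gpi_in[OF gu(2)]] by simp
      then show "x \<in> (\<lambda>g. cobound Y \<beta> #>\<^bsub>CZ Y\<^esub> gpi g) ` carrier (CZ X)" using gu(2) by blast
    qed
  qed
  finally show ?thesis .
qed


lemma inv_const:
  fixes w :: "'a \<times> int \<Rightarrow> int"
  assumes w: "continuous_on Y w" and inv: "\<And>y. y \<in> Y \<Longrightarrow> w (rho y) = w y"
    and y: "y \<in> Y" and y0: "y0 \<in> Y"
  shows "w y = w y0"
proof -
  define F where "F = {y \<in> Y. w y = w y0}"
  have cl: "closedin (top_of_set Y) F" unfolding F_def by (rule continuous_closedin_preimage_constant[OF w])
  have FY: "F \<subseteq> Y" unfolding F_def by blast
  have "\<beta> ` F = F"
  proof
    show "\<beta> ` F \<subseteq> F"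
    proof
      fix z assume "z \<in> \<beta> ` F"
      then obtain y where y: "y \<in> F" "z = \<beta> y" by auto
      have yY: "y \<in> Y" using y FY by auto
      have "w (\<beta> y) = w (rho (\<beta> y))" using inv[OF beta_in[OF yY]] by simp
      also have "\<dots> = w y" using rho_beta[OF yY] by simp
      finally show "z \<in> F" using y beta_in[OF yY] unfolding F_def by auto
    qed
    show "F \<subseteq> \<beta> ` F"
    proof
      fix y assume y: "y \<in> F"
      have yY: "y \<in> Y" using y FY by auto
      have "rho y \<in> F" using y inv[OF yY] rho_in[OF yY] unfolding F_def by auto
      then show "y \<in> \<beta> ` F" using beta_rho[OF yY] by (metis image_eqI)
    qed
  qed
  then have "F = {} \<or> F = Y" using minY cl FY unfolding minimal_homeo_def by blast
  moreover have "y0 \<in> F" using y0 unfolding F_def by auto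
  ultimately have "F = Y" by auto
  then show ?thesis using y unfolding F_def by auto
qed

lemma mod_eq_dvd: "(a::int) mod n = t \<Longrightarrow> n dvd (a - t)"
  by (metis minus_mod_eq_mult_div dvd_triv_left)

lemma sig_eq: "j + 1 < int m \<Longrightarrow> 0 \<le> j \<Longrightarrow> sig (x, j) = (x, j + 1)"
  by (simp add: sig_def)
lemma sig_last: "sig (x, int m - 1) = (x, 0)"
  by (simp add: sig_def)

lemma LG:
  fixes v :: "'a \<times> int \<Rightarrow> int" and G :: "'a \<Rightarrow> int" and n :: int
  assumes v: "continuous_on Y v" and h: "\<And>y. y \<in> Y \<Longrightarrow> n dvd (v y - v (rho y) - G (fst y))"
  shows "\<exists>t. n dvd (int m * t) \<and> (\<forall>x\<in>X. \<forall>j. j < m \<longrightarrow> n dvd (v (x, int j) - v (x, 0) - int j * t))"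
proof -
  define w where "w y = (v (sig y) - v y) mod n" for y
  have cvs: "continuous_on Y (\<lambda>y. v (sig y))"
    by (rule cont_comp_Y[OF v cont_sig]) (use sig_in in blast)
  have cw: "continuous_on Y w"
    unfolding w_def by (rule cont_int_comp2[where h="\<lambda>a b. (a - b) mod n", OF cvs v])
  have winv: "w (rho y) = w y" if y: "y \<in> Y" for y
  proof -
    have A: "n dvd (v (sig y) - v (rho (sig y)) - G (fst y))" using h[OF sig_in[OF y]] by simp
    have B: "n dvd (v y - v (rho y) - G (fst y))" using h[OF y] .
    have "n dvd ((v y - v (rho y) - G (fst y)) - (v (sig y) - v (rho (sig y)) - G (fst y)))"
      using dvd_diff[OF B A] .
    then have "n dvd ((v (rho (sig y)) - v (rho y)) - (v (sig y) - v y))"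
      by (simp add: algebra_simps)
    then have "(v (rho (sig y)) - v (rho y)) mod n = (v (sig y) - v y) mod n"
      by (simp add: mod_eq_dvd_iff)
    then show ?thesis unfolding w_def rho_sig[OF y] .
  qed
  obtain x0 where x0: "x0 \<in> X" using Xne by auto
  have y0: "(x0, 0) \<in> Y" using m_pos by (simp add: Zm_def x0)
  define t where "t = w (x0, 0)"
  have wt: "w y = t" if "y \<in> Y" for y using inv_const[OF cw winv that y0] t_def by simp
  have step: "n dvd (v (x, int j + 1) - v (x, int j) - t)" if x: "x \<in> X" and j: "j + 1 < m" for x j
  proof -
    have "(x, int j) \<in> Y" using x j by (simp add: Zm_def)
    then have "w (x, int j) = t" by (rule wt)
    moreover have "sig (x, int j) = (x, int j + 1)" using j by (intro sig_eq) auto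
    ultimately have "(v (x, int j + 1) - v (x, int j)) mod n = t" unfolding w_def by simp
    then show ?thesis by (rule mod_eq_dvd)
  qed
  have last: "n dvd (v (x, 0) - v (x, int m - 1) - t)" if x: "x \<in> X" for x
  proof -
    have "(x, int m - 1) \<in> Y" using x m_pos by (simp add: Zm_def)
    then have "w (x, int m - 1) = t" by (rule wt)
    then have "(v (x, 0) - v (x, int m - 1)) mod n = t" unfolding w_def sig_last by simp
    then show ?thesis by (rule mod_eq_dvd)
  qed
  have ind: "j < m \<longrightarrow> n dvd (v (x, int j) - v (x, 0) - int j * t)" if x: "x \<in> X" for x j
  proof (induction j)
    case 0 then show ?case by simp
  next
    case (Suc j)
    show ?case
    proof
      assume "Suc j < m"
      then have "j < m" "j + 1 < m" by auto
      then have "n dvd (v (x, int j) - v (x, 0) - int j * t)" using Suc.IH by blast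
      from dvd_add[OF this step[OF x \<open>j + 1 < m\<close>]]
      show "n dvd (v (x, int (Suc j)) - v (x, 0) - int (Suc j) * t)"
        by (simp add: algebra_simps)
    qed
  qed
  have "n dvd (v (x0, int (m - 1)) - v (x0, 0) - int (m - 1) * t)" using ind[OF x0, of "m - 1"] m1 by simp
  then have "n dvd (v (x0, int m - 1) - v (x0, 0) - (int m - 1) * t)" using m1 by (simp add: of_nat_diff)
  from dvd_add[OF this last[OF x0]] have "n dvd (- (int m * t))" by (simp add: algebra_simps)
  then have "n dvd (int m * t)" by simp
  then show ?thesis using ind by blast
qed


lemma cont_cai: "continuous_on X (\<lambda>x. c (\<alpha>inv x))"
  by (rule continuous_on_compose2[OF cc cont_ai]) (auto simp: ai_in)

lemma f0_pt: "y \<in> Y \<Longrightarrow> f0 y = (if snd y < c (\<alpha>inv (fst y)) then 1 else 0)"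
  by (cases y) (auto simp: f0_def Zm_def)

lemma f0_out: "y \<notin> Y \<Longrightarrow> f0 y = 0"
  by (cases y) (auto simp: f0_def)

lemma f0_in: "f0 \<in> carrier (CZ Y)"
proof -
  have c1: "continuous_on Y (\<lambda>p. c (\<alpha>inv (fst p)))" by (rule cont_fstX[OF cont_cai])
  have c2: "continuous_on Y (snd :: 'a \<times> int \<Rightarrow> int)" by (intro continuous_intros)
  have "continuous_on Y (\<lambda>p. (if snd p < c (\<alpha>inv (fst p)) then 1 else 0) :: int)"
    by (rule cont_int_comp2[where h="\<lambda>a b. if a < b then 1 else 0", OF c2 c1])
  then have "(\<lambda>p. if p \<in> Y then (if snd p < c (\<alpha>inv (fst p)) then 1 else 0) else 0) \<in> carrier (CZ Y)"
    by (rule CZ_on)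
  moreover have "(\<lambda>p. if p \<in> Y then (if snd p < c (\<alpha>inv (fst p)) then 1 else 0) else 0) = f0"
    by (auto simp: fun_eq_iff f0_pt f0_out)
  ultimately show ?thesis by simp
qed

lemma M1pt: "y \<in> Y \<Longrightarrow> int m * f0 y = c (\<alpha>inv (fst y)) - snd y + snd (rho y)"
proof -
  assume y: "y \<in> Y"
  obtain x k where xk: "y = (x, k)" by (cases y)
  have x: "x \<in> X" and k: "0 \<le> k" "k < int m" using y xk by (auto simp: Zm_def)
  have cr: "0 \<le> c (\<alpha>inv x)" "c (\<alpha>inv x) < int m" using c_range[OF ai_in[OF x]] by auto
  have "snd (rho y) = (k - c (\<alpha>inv x)) mod int m" by (simp add: rho_def xk)
  also have "\<dots> = (if c (\<alpha>inv x) \<le> k then k - c (\<alpha>inv x) else k - c (\<alpha>inv x) + int m)"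
    by (rule mod_sub_cases[OF k cr])
  finally show ?thesis using y xk f0_pt[OF y] by auto
qed

definition g0 where "g0 = (\<lambda>x. if x \<in> X then c (\<alpha>inv x) else 0)"
definition u0 where "u0 = (\<lambda>p. if p \<in> Y then - snd p else (0::int))"

lemma g0_in: "g0 \<in> carrier (CZ X)" unfolding g0_def by (rule CZ_on[OF cont_cai])
lemma u0_in: "u0 \<in> carrier (CZ Y)" unfolding u0_def
  by (rule CZ_on, rule cont_int_comp[where h=uminus]) (intro continuous_intros)

lemma M1: "(\<lambda>p. int m * f0 p) \<in> W"
proof (rule W_I[OF CZ_smult[OF f0_in] g0_in u0_in])
  fix y assume y: "y \<in> Y"
  then show "int m * f0 y = g0 (fst y) + u0 y - u0 (rho y)"
    using M1pt[OF y] rho_in[OF y] by (auto simp: g0_def u0_def)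
qed

lemma int_mult_small: "int i = int m * q \<Longrightarrow> i < m \<Longrightarrow> i = 0"
proof (cases "q \<le> 0")
  case True
  assume "int i = int m * q"
  moreover have "int m * q \<le> 0" using True by (simp add: mult_nonneg_nonpos)
  ultimately show ?thesis by simp
next
  case False
  assume e: "int i = int m * q" and im: "i < m"
  have "int m * 1 \<le> int m * q" using False by (intro mult_left_mono) auto
  moreover have "int i < int m" using im by simp
  ultimately show ?thesis using e by linarith
qed

lemma M2: assumes i: "i < m" and W: "(\<lambda>p. int i * f0 p) \<in> W" shows "i = 0"
proof (cases "m = 1")
  case True then show ?thesis using i by simp
next
  case False
  then have m2: "1 < m" using m1 by simp
  obtain g u where gu: "g \<in> carrier (CZ X)" "u \<in> carrier (CZ Y)"
    "\<And>y. y \<in> Y \<Longrightarrow> int i * f0 y = g (fst y) + u y - u (rho y)" using W by (metis W_E)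
  define v where "v p = int m * u p + int i * snd p" for p
  have cu: "continuous_on Y u" using gu(2) by (simp add: carrier_CZ)
  have c2: "continuous_on Y (snd :: 'a \<times> int \<Rightarrow> int)" by (intro continuous_intros)
  have cv: "continuous_on Y v" unfolding v_def
    by (rule cont_int_comp2[where h="\<lambda>a b. int m * a + int i * b", OF cu c2])
  have hyp: "(0::int) dvd (v y - v (rho y) - (\<lambda>x. int i * c (\<alpha>inv x) - int m * g x) (fst y))" if y: "y \<in> Y" for y
  proof -
    have e1: "int i * f0 y = g (fst y) + u y - u (rho y)" using gu(3)[OF y] .
    have e2: "int m * f0 y = c (\<alpha>inv (fst y)) - snd y + snd (rho y)" using M1pt[OF y] .
    have "int m * (int i * f0 y) = int i * (int m * f0 y)" by (simp add: algebra_simps)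
    then have "v y - v (rho y) - (int i * c (\<alpha>inv (fst y)) - int m * g (fst y)) = 0"
      unfolding v_def e1 e2 by (simp add: algebra_simps)
    then show ?thesis by simp
  qed
  then obtain t where t: "(0::int) dvd (int m * t)"
    and tj: "\<forall>x\<in>X. \<forall>j. j < m \<longrightarrow> (0::int) dvd (v (x, int j) - v (x, 0) - int j * t)"
    using LG[OF cv hyp] by blast
  have "t = 0" using t m1 by simp
  obtain x0 where x0: "x0 \<in> X" using Xne by auto
  have "v (x0, 1) = v (x0, 0)" using tj x0 m2 \<open>t = 0\<close> by fastforce
  then have "int i = int m * (u (x0, 0) - u (x0, 1))" unfolding v_def by (simp add: algebra_simps)
  then show ?thesis using int_mult_small i by blast
qed


lemma M3:
  assumes f: "f \<in> carrier (CZ Y)" and n: "0 < n" and W: "(\<lambda>p. int n * f p) \<in> W"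
  shows "\<exists>i<m. (\<lambda>p. f p - int i * f0 p) \<in> W"
proof -
  obtain g u where gu: "g \<in> carrier (CZ X)" "u \<in> carrier (CZ Y)"
    "\<And>y. y \<in> Y \<Longrightarrow> int n * f y = g (fst y) + u y - u (rho y)" using W by (metis W_E)
  define N where "N = int n"
  have Npos: "0 < N" using n by (simp add: N_def)
  have cu: "continuous_on Y u" using gu(2) by (simp add: carrier_CZ)
  have cg: "continuous_on X g" using gu(1) by (simp add: carrier_CZ)
  have c2: "continuous_on Y (snd :: 'a \<times> int \<Rightarrow> int)" by (intro continuous_intros)
  have hyp: "N dvd (u y - u (rho y) - (\<lambda>x. - g x) (fst y))" if y: "y \<in> Y" for y
  proof -
    have "u y - u (rho y) - (\<lambda>x. - g x) (fst y) = N * f y" using gu(3)[OF y] by (simp add: N_def)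
    then show ?thesis by simp
  qed
  obtain t where t: "N dvd (int m * t)"
    and tj: "\<forall>x\<in>X. \<forall>j. j < m \<longrightarrow> N dvd (u (x, int j) - u (x, 0) - int j * t)"
    using LG[OF cu hyp] by blast
  define s where "s = int m * t div N"
  have ms: "int m * t = N * s" using t by (simp add: s_def)
  define z where "z = (\<lambda>p. if p \<in> Y then (u p - u (fst p, 0) - snd p * t) div N else 0)"
  have cu0: "continuous_on Y (\<lambda>p. u (fst p, 0))"
    by (rule cont_comp_Y[OF cu]) (use m1 in \<open>auto intro!: continuous_intros simp: Zm_def\<close>)
  have ca: "continuous_on Y (\<lambda>p. u p - u (fst p, 0))"
    by (rule cont_int_comp2[where h="\<lambda>a b. a - b", OF cu cu0])
  have cb: "continuous_on Y (\<lambda>p. (u p - u (fst p, 0) - snd p * t) div N)"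
    by (rule cont_int_comp2[where h="\<lambda>a b. (a - b * t) div N", OF ca c2])
  have z_in: "z \<in> carrier (CZ Y)" unfolding z_def by (rule CZ_on[OF cb])
  have u_dec: "u y = u (fst y, 0) + snd y * t + N * z y" if y: "y \<in> Y" for y
  proof -
    obtain x k where xk: "y = (x, k)" by (cases y)
    have x: "x \<in> X" and k: "0 \<le> k" "k < int m" using y xk by (auto simp: Zm_def)
    have "nat k < m" using k by linarith
    then have "N dvd (u (x, int (nat k)) - u (x, 0) - int (nat k) * t)" using tj x by blast
    then have "N dvd (u y - u (fst y, 0) - snd y * t)" using k xk by (simp add: mult.commute)
    then have "N * ((u y - u (fst y, 0) - snd y * t) div N) = u y - u (fst y, 0) - snd y * t"
      by simp
    then show ?thesis using y unfolding z_def by simp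
  qed
  define G where "G = (\<lambda>x. if x \<in> X then g x + u (x, 0) - u (\<alpha>inv x, 0) + t * c (\<alpha>inv x) else 0)"
  have cux: "continuous_on X (\<lambda>x. u (x, 0))"
    by (rule cont_comp_Y[OF cu]) (use m1 in \<open>auto intro!: continuous_intros simp: Zm_def\<close>)
  have cuax: "continuous_on X (\<lambda>x. u (\<alpha>inv x, 0))"
    by (rule cont_comp_Y[OF cu]) (use m1 in \<open>auto intro!: continuous_intros cont_ai simp: Zm_def ai_in\<close>)
  have e1: "continuous_on X (\<lambda>x. g x + u (x, 0))"
    by (rule cont_int_comp2[where h="\<lambda>a b. a + b", OF cg cux])
  have e2: "continuous_on X (\<lambda>x. g x + u (x, 0) - u (\<alpha>inv x, 0))"
    by (rule cont_int_comp2[where h="\<lambda>a b. a - b", OF e1 cuax])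
  have e3: "continuous_on X (\<lambda>x. g x + u (x, 0) - u (\<alpha>inv x, 0) + t * c (\<alpha>inv x))"
    by (rule cont_int_comp2[where h="\<lambda>a b. a + t * b", OF e2 cont_cai])
  have G_in: "G \<in> carrier (CZ X)" unfolding G_def by (rule CZ_on[OF e3])
  have key: "G (fst y) = N * (f y + s * f0 y - z y + z (rho y))" if y: "y \<in> Y" for y
  proof -
    have x: "fst y \<in> X" using y by auto
    have ry: "rho y \<in> Y" by (rule rho_in[OF y])
    have A: "N * f y = g (fst y) + u y - u (rho y)" using gu(3)[OF y] by (simp add: N_def)
    have B: "u y = u (fst y, 0) + snd y * t + N * z y" by (rule u_dec[OF y])
    have C: "u (rho y) = u (\<alpha>inv (fst y), 0) + snd (rho y) * t + N * z (rho y)"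
      using u_dec[OF ry] by (simp add: fst_rho)
    have D: "int m * f0 y = c (\<alpha>inv (fst y)) - snd y + snd (rho y)" by (rule M1pt[OF y])
    have F: "N * s * f0 y = t * (c (\<alpha>inv (fst y)) - snd y + snd (rho y))"
      using D ms by (metis mult.assoc mult.commute)
    have "G (fst y) = g (fst y) + u (fst y, 0) - u (\<alpha>inv (fst y), 0) + t * c (\<alpha>inv (fst y))"
      using x by (simp add: G_def)
    also have "\<dots> = N * (f y + s * f0 y - z y + z (rho y))"
      using A B C F by algebra
    finally show ?thesis .
  qed
  define G' where "G' = (\<lambda>x. G x div N)"
  have G'_in: "G' \<in> carrier (CZ X)"
    using G_in unfolding G'_def carrier_CZ by (auto intro: cont_int_comp)
  have h1W: "(\<lambda>p. f p + s * f0 p) \<in> W"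
  proof (rule W_I[OF CZ_add[OF f CZ_smult[OF f0_in]] G'_in z_in])
    fix y assume y: "y \<in> Y"
    have "G' (fst y) = f y + s * f0 y - z y + z (rho y)"
      unfolding G'_def key[OF y] using Npos by simp
    then show "f y + s * f0 y = G' (fst y) + z y - z (rho y)" by simp
  qed
  define i where "i = nat ((- s) mod int m)"
  have ii: "int i = (- s) mod int m" unfolding i_def using m_pos by simp
  have im: "i < m" using m_pos unfolding i_def by (simp add: nat_less_iff)
  have "(s + int i) mod int m = 0" unfolding ii by (simp add: mod_add_right_eq)
  then obtain q where q: "s + int i = int m * q" by (metis dvd_def mod_0_imp_dvd)
  have "(\<lambda>p. (f p + s * f0 p) + (- q) * (int m * f0 p)) \<in> W"
    by (rule W_add[OF h1W W_smult[OF M1]])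
  moreover have "(\<lambda>p. (f p + s * f0 p) + (- q) * (int m * f0 p)) = (\<lambda>p. f p - int i * f0 p)"
  proof
    fix p
    show "(f p + s * f0 p) + (- q) * (int m * f0 p) = f p - int i * f0 p"
      using q by algebra
  qed
  ultimately show ?thesis using im by auto
qed


lemma main:
  "torsion (Kquot X \<alpha> c m) \<cong> integer_mod_group m
   \<and> qclass X \<alpha> c m f0 \<in> carrier (torsion (Kquot X \<alpha> c m))
   \<and> generate (torsion (Kquot X \<alpha> c m)) {qclass X \<alpha> c m f0} = carrier (torsion (Kquot X \<alpha> c m))"
proof -
  let ?G = "CZ Y" and ?H = "cobound Y \<beta>"
  let ?Q = "Kquot X \<alpha> c m" and ?\<phi> = "qclass X \<alpha> c m"
  have Qe: "?Q = (?G Mod ?H) Mod pistar_image X \<alpha> c m" by (simp add: Kquot_def K0_def)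
  have \<phi>e: "?\<phi> = (\<lambda>f. pistar_image X \<alpha> c m #>\<^bsub>?G Mod ?H\<^esub> (?H #>\<^bsub>?G\<^esub> f))"
    by (simp add: qclass_def K0_def fun_eq_iff)
  note Q = quot2[OF CZ_comm_group sub_H sub_W H_W pistar_image_eq Qe \<phi>e]
  have cQ: "comm_group ?Q" by (rule Q(1))
  interpret Qg: comm_group ?Q by (rule cQ)
  have phi_pow: "?\<phi> f [^]\<^bsub>?Q\<^esub> (n::nat) = ?\<phi> (\<lambda>p. int n * f p)" if "f \<in> carrier ?G" for f n
    using Q(6)[OF that, of n] by (simp add: CZ_pow)
  have ker: "?\<phi> f = \<one>\<^bsub>?Q\<^esub> \<longleftrightarrow> f \<in> W" if "f \<in> carrier ?G" for f
    by (rule Q(5)[OF that])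
  have a: "?\<phi> f0 \<in> carrier ?Q" using Q(2) f0_in by auto
  have am: "?\<phi> f0 [^]\<^bsub>?Q\<^esub> m = \<one>\<^bsub>?Q\<^esub>"
    using phi_pow[OF f0_in, of m] ker[OF CZ_smult[OF f0_in]] M1 by simp
  have inj: "i = 0" if "i < m" "?\<phi> f0 [^]\<^bsub>?Q\<^esub> i = \<one>\<^bsub>?Q\<^esub>" for i
    using that phi_pow[OF f0_in, of i] ker[OF CZ_smult[OF f0_in]] M2 by simp
  have tor: "\<exists>i<m. x = ?\<phi> f0 [^]\<^bsub>?Q\<^esub> i"
    if x: "x \<in> carrier ?Q" and n: "0 < n" and xn: "x [^]\<^bsub>?Q\<^esub> (n::nat) = \<one>\<^bsub>?Q\<^esub>" for x n
  proof -
    obtain f where f: "f \<in> carrier ?G" "x = ?\<phi> f" using x Q(2) by auto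
    have "(\<lambda>p. int n * f p) \<in> W" using xn f phi_pow[OF f(1), of n] ker[OF CZ_smult[OF f(1)]] by simp
    then obtain i where i: "i < m" "(\<lambda>p. f p - int i * f0 p) \<in> W" using M3[OF f(1) n] by blast
    have d_in: "(\<lambda>p. f p - int i * f0 p) \<in> carrier ?G"
      using CZ_add[OF f(1) CZ_smult[OF f0_in, of "- int i"]] by simp
    have e_in: "(\<lambda>p. int i * f0 p) \<in> carrier ?G" by (rule CZ_smult[OF f0_in])
    have "x = ?\<phi> ((\<lambda>p. f p - int i * f0 p) \<otimes>\<^bsub>?G\<^esub> (\<lambda>p. int i * f0 p))" using f(2) by simp
    also have "\<dots> = ?\<phi> (\<lambda>p. f p - int i * f0 p) \<otimes>\<^bsub>?Q\<^esub> ?\<phi> (\<lambda>p. int i * f0 p)"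
      by (rule Q(3)[OF d_in e_in, symmetric])
    also have "?\<phi> (\<lambda>p. f p - int i * f0 p) = \<one>\<^bsub>?Q\<^esub>" using ker[OF d_in] i(2) by simp
    also have "?\<phi> (\<lambda>p. int i * f0 p) = ?\<phi> f0 [^]\<^bsub>?Q\<^esub> i" using phi_pow[OF f0_in, of i] by simp
    also have "\<one>\<^bsub>?Q\<^esub> \<otimes>\<^bsub>?Q\<^esub> ?\<phi> f0 [^]\<^bsub>?Q\<^esub> i = ?\<phi> f0 [^]\<^bsub>?Q\<^esub> i"
      using a by simp
    finally show ?thesis using i(1) by blast
  qed
  show ?thesis by (rule cyclic_torsion[OF cQ a m1 am inj tor])
qed

end

theorem lemma4p5:
  fixes X :: "'a::metric_space set" and \<alpha> \<alpha>inv :: "'a \<Rightarrow> 'a" and c :: "'a \<Rightarrow> int" and m :: nat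
  assumes "cantor_set X"
    and "homeomorphism X X \<alpha> \<alpha>inv"
    and "minimal_homeo X \<alpha>"
    and "m \<ge> 1"
    and "continuous_on X c" and "c ` X \<subseteq> Zm m"
    and "minimal_homeo (X \<times> Zm m) (skew \<alpha> c m)"
  shows "torsion (Kquot X \<alpha> c m) \<cong> integer_mod_group m
     \<and> qclass X \<alpha> c m
         (\<lambda>(x,k). if (x,k) \<in> X \<times> Zm m \<and> c (\<alpha>inv x) \<noteq> 0 \<and> k \<in> {0..<c (\<alpha>inv x)} then 1 else 0)
         \<in> carrier (torsion (Kquot X \<alpha> c m))
     \<and> generate (torsion (Kquot X \<alpha> c m))
         {qclass X \<alpha> c m
           (\<lambda>(x,k). if (x,k) \<in> X \<times> Zm m \<and> c (\<alpha>inv x) \<noteq> 0 \<and> k \<in> {0..<c (\<alpha>inv x)} then 1 else 0)}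
       = carrier (torsion (Kquot X \<alpha> c m))"
proof -
  interpret cms X \<alpha> \<alpha>inv c m using assms by unfold_locales
  show ?thesis using main unfolding f0_def .
qed

end
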